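(* Assume the reduced model family is $\sigma$-admissible and let $u^*(w)$ be the estimator obtained by surrogate model selection using the residual surrogate $\mathcal S(v,\mathcal M)=\min_{y\in Y}\mathcal R(v,y)$. For $y\in Y$ let $u=u(y)$ and $w=P_Wu$, and let $y^*\in\operatorname{argmin}_{y'\in Y}\mathcal R(u^*(w),y')$. Then $$\|u(y)-u(y^* )\|\le(1+\kappa)\delta_{\kappa\sigma},\qquad\kappa=R/r.$$ If in addition $\delta_0=0$ and $\mu(\mathcal M,W):=\frac12\sup_{\sigma'>0}\delta_{\sigma'}/\sigma'<\infty$, then $$\|u(y)-u(y^* )\|\le(2\mu(\mathcal M,W)+1)\kappa\sigma.$$
   Context: Let $V$ and $Z$ be real Hilbert spaces, with $\|\cdot\|$ the norm of $V$ and $Z'$ the dual of $Z$. Let $Y\subset\mathbb R^d$ be compact. For $y\in Y$ let $A(y):V\to Z'$ be a bounded linear isomorphism and $f(y)\in Z'$, with $y\mapsto A(y)$ and $y\mapsto f(y)$ continuous. Assume there are constants $0<r\le R$ such that $\|A(y)\|_{V\to Z'}\le R$ and $\|A(y)^{-1}\|_{Z'\to V}\le r^{-1}$ for all $y\in Y$. Let $u(y)=A(y)^{-1}f(y)$ and $\mathcal M=\{u(y):y\in Y\}$. Define the residual $\mathcal R(v,y)=\|A(y)v-f(y)\|_{Z'}$, so that $r\|v-u(y)\|\le\mathcal R(v,y)\le R\|v-u(y)\|$. Let $W\subset V$ be a subspace of finite dimension $m$, let $P_W$ be the orthogonal projection onto $W$, and let $W^\perp$ be its orthogonal complement. For $w\in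 W$ put $V_w=w+W^\perp$. For $\sigma\ge0$ define $\mathcal M_\sigma=\{v:\operatorname{dist}(v,\mathcal M)\le\sigma\}$ and $\delta_\sigma=\sup\{\|u-v\|:u,v\in\mathcal M_\sigma,u-v\in W^\perp\}$. For a finite-dimensional subspace $E$ let $\mu(E,W)=\sup_{v\in E\setminus\{0\}}\|v\|/\|P_Wv\|$, with $\mu(\{0\},W)=1$. A reduced model family consists of: - sets $\mathcal M_1,\dots,\mathcal M_K$ with $\mathcal M=\bigcup_k\mathcal M_k$; - affine spaces $V_k=\bar u_k+\bar V_k$ with $\dim\bar V_k=n_k\le m$; - numbers $\varepsilon_k\ge\sup_{u\in\mathcal M_k}\operatorname{dist}(u,V_k)$; - constants $\mu_k=\mu(\bar V_k,W)<\infty$. The family is $\sigma$-admissible if $\mu_k\varepsilon_k\le\sigma$ for all $k$. PBDW estimators: $u_k^*(w)=\operatorname{argmin}\{\operatorname{dist}(v,V_k):v\in V_w\}$. Surrogate model selection picks $k^*(w)$ as a minimizer of $k\mapsto\mathcal S(u_k^*(w),\mathcal M)$ and sets $u^*(w)=u^*_{k^*(w)}(w)$. *)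

theory Defs
  imports "HOL-Analysis.Analysis"
begin

definition orth_proj :: "'v::real_inner set \<Rightarrow> 'v \<Rightarrow> 'v" where
  "orth_proj W v = (THE w. w \<in> W \<and> v - w \<in> orthogonal_comp W)"

definition fin_dim_subspace :: "'v::real_vector set \<Rightarrow> bool" where
  "fin_dim_subspace E \<longleftrightarrow> subspace E \<and> (\<exists>B. finite B \<and> span B = E)"

definition sol :: "('y \<Rightarrow> ('v::real_normed_vector \<Rightarrow>\<^sub>L 'z::real_normed_vector)) \<Rightarrow> ('y \<Rightarrow> 'z) \<Rightarrow> 'y \<Rightarrow> 'v" where
  "sol A f y = (THE v. blinfun_apply (A y) v = f y)"

definition resid :: "('y \<Rightarrow> ('v::real_normed_vector \<Rightarrow>\<^sub>L 'z::real_normed_vector)) \<Rightarrow> ('y \<Rightarrow> 'z) \<Rightarrow> 'v \<Rightarrow> 'y \<Rightarrow> real" where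
  "resid A f v y = norm (blinfun_apply (A y) v - f y)"

definition fattened :: "'v::real_normed_vector set \<Rightarrow> real \<Rightarrow> 'v set" where
  "fattened M s = {v. infdist v M \<le> s}"

definition delta :: "'v::real_inner set \<Rightarrow> 'v set \<Rightarrow> real \<Rightarrow> real" where
  "delta M W s = Sup {norm (u - v) | u v. u \<in> fattened M s \<and> v \<in> fattened M s \<and> u - v \<in> orthogonal_comp W}"

definition mu_EW :: "'v::real_inner set \<Rightarrow> 'v set \<Rightarrow> ereal" where
  "mu_EW E W = (if E - {0} = {} then 1 else
     (SUP v \<in> E - {0}. (if orth_proj W v = 0 then \<infinity> else ereal (norm v / norm (orth_proj W v)))))"

definition mu_MW :: "'v::real_inner set \<Rightarrow> 'v set \<Rightarrow> real" where
  "mu_MW M W = (1/2) * (SUP s \<in> {0<..}. delta M W s / s)"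

end

theory Submission
  imports Defs
begin



lemma proj_exists:
  fixes E :: "'v::real_inner set"
  assumes "fin_dim_subspace E"
  shows "\<exists>p\<in>E. x - p \<in> orthogonal_comp E"
proof -
  obtain B where B: "finite B" "span B = E" using assms unfolding fin_dim_subspace_def by blast
  from basis_orthogonal[OF B(1)] obtain C where C0: "finite C" "span C = span B" "pairwise orthogonal C"
    by blast
  have C: "finite C" "span C = E" "pairwise orthogonal C" using C0 B(2) by auto
  define p where "p = (\<Sum>c\<in>C. (c \<bullet> x / (c \<bullet> c)) *\<^sub>R c)"
  have "p \<in> span C" unfolding p_def 
    by (intro span_sum span_scale span_base)
  hence pE: "p \<in> E" using C(2) by simp
  have orth: "orthogonal (x - p) c" if cC: "c \<in> C" for c
  proof -
    have "c \<bullet> p = (\<Sum>c'\<in>C. (c' \<bullet> x / (c' \<bullet> c')) * (c \<bullet> c'))"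
      unfolding p_def by (simp add: inner_sum_right)
    also have "\<dots> = (c \<bullet> x / (c \<bullet> c)) * (c \<bullet> c) + (\<Sum>c'\<in>C-{c}. (c' \<bullet> x / (c' \<bullet> c')) * (c \<bullet> c'))"
      by (rule sum.remove[OF C(1) cC])
    also have "(\<Sum>c'\<in>C-{c}. (c' \<bullet> x / (c' \<bullet> c')) * (c \<bullet> c')) = 0"
    proof (rule sum.neutral, rule ballI)
      fix c' assume c': "c' \<in> C - {c}"
      have "pairwise orthogonal C" by (rule C(3))
      have c'1: "c \<noteq> c'" "c' \<in> C" using c' by auto
      have "orthogonal c c'" by (rule pairwiseD(1)[OF C(3) cC c'1(2) c'1(1)])
      hence "c \<bullet> c' = 0" by (simp only: orthogonal_def)
      thus "(c' \<bullet> x / (c' \<bullet> c')) * (c \<bullet> c') = 0" by simp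
    qed
    also have "(c \<bullet> x / (c \<bullet> c)) * (c \<bullet> c) = c \<bullet> x"
      by (cases "c = 0") auto
    finally have "c \<bullet> p = c \<bullet> x" by simp
    thus ?thesis by (simp add: orthogonal_def inner_diff_right inner_commute)
  qed
  have "x - p \<in> orthogonal_comp E"
    unfolding orthogonal_comp_def
  proof (rule CollectI, rule ballI)
    fix y assume "y \<in> E"
    hence "y \<in> span C" using C(2) by simp
    hence "orthogonal (x - p) y" by (rule orthogonal_to_span) (rule orth)
    thus "orthogonal y (x - p)" by (simp add: orthogonal_commute)
  qed
  with pE show ?thesis by blast
qed

lemma fds_subspace: "fin_dim_subspace E \<Longrightarrow> subspace E"
  unfolding fin_dim_subspace_def by blast

lemma proj_unique_aux:
  fixes E :: "'v::real_inner set"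
  assumes "subspace E" "p \<in> E" "x - p \<in> orthogonal_comp E" "q \<in> E" "x - q \<in> orthogonal_comp E"
  shows "p = q"
proof -
  have "(x - q) - (x - p) \<in> orthogonal_comp E"
    using assms subspace_orthogonal_comp subspace_diff by blast
  hence "p - q \<in> orthogonal_comp E" by (simp add: algebra_simps)
  moreover have "p - q \<in> E" using assms subspace_diff by blast
  ultimately have "orthogonal (p - q) (p - q)" unfolding orthogonal_comp_def by blast
  thus ?thesis by (simp add: orthogonal_def)
qed

lemma proj_props:
  fixes E :: "'v::real_inner set"
  assumes "fin_dim_subspace E"
  shows "orth_proj E x \<in> E" "x - orth_proj E x \<in> orthogonal_comp E"
proof -
  have "\<exists>!p. p \<in> E \<and> x - p \<in> orthogonal_comp E"
    using proj_exists[OF assms] proj_unique_aux[OF fds_subspace[OF assms]] by blast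
  from theI'[OF this] show "orth_proj E x \<in> E" "x - orth_proj E x \<in> orthogonal_comp E"
    unfolding orth_proj_def by auto
qed

lemma proj_unique:
  fixes E :: "'v::real_inner set"
  assumes "fin_dim_subspace E" "p \<in> E" "x - p \<in> orthogonal_comp E"
  shows "orth_proj E x = p"
  using proj_unique_aux[OF fds_subspace[OF assms(1)] proj_props[OF assms(1)] assms(2,3)] .

lemma proj_diff:
  fixes E :: "'v::real_inner set"
  assumes "fin_dim_subspace E"
  shows "orth_proj E (x - y) = orth_proj E x - orth_proj E y"
proof (rule proj_unique[OF assms])
  show "orth_proj E x - orth_proj E y \<in> E"
    using proj_props[OF assms] fds_subspace[OF assms] subspace_diff by blast
  have "(x - orth_proj E x) - (y - orth_proj E y) \<in> orthogonal_comp E"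
    using proj_props[OF assms] subspace_orthogonal_comp subspace_diff by blast
  thus "x - y - (orth_proj E x - orth_proj E y) \<in> orthogonal_comp E"
    by (simp add: algebra_simps)
qed

lemma proj_add:
  fixes E :: "'v::real_inner set"
  assumes "fin_dim_subspace E"
  shows "orth_proj E (x + y) = orth_proj E x + orth_proj E y"
proof (rule proj_unique[OF assms])
  show "orth_proj E x + orth_proj E y \<in> E"
    using proj_props[OF assms] fds_subspace[OF assms] subspace_add by blast
  have "(x - orth_proj E x) + (y - orth_proj E y) \<in> orthogonal_comp E"
    using proj_props[OF assms] subspace_orthogonal_comp subspace_add by blast
  thus "x + y - (orth_proj E x + orth_proj E y) \<in> orthogonal_comp E"
    by (simp add: algebra_simps)
qed

lemma proj_scale:
  fixes E :: "'v::real_inner set"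
  assumes "fin_dim_subspace E"
  shows "orth_proj E (c *\<^sub>R x) = c *\<^sub>R orth_proj E x"
proof (rule proj_unique[OF assms])
  show "c *\<^sub>R orth_proj E x \<in> E"
    using proj_props[OF assms] fds_subspace[OF assms] subspace_scale by blast
  have "c *\<^sub>R (x - orth_proj E x) \<in> orthogonal_comp E"
    using proj_props[OF assms] subspace_orthogonal_comp subspace_scale by blast
  thus "c *\<^sub>R x - c *\<^sub>R orth_proj E x \<in> orthogonal_comp E"
    by (simp add: algebra_simps)
qed

lemma proj_perp:
  fixes E :: "'v::real_inner set"
  assumes "fin_dim_subspace E" "x \<in> orthogonal_comp E"
  shows "orth_proj E x = 0"
  using assms by (intro proj_unique) (auto simp: fds_subspace subspace_0)

lemma perp_inner: "x \<in> orthogonal_comp E \<Longrightarrow> y \<in> E \<Longrightarrow> x \<bullet> y = 0"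
  unfolding orthogonal_comp_def orthogonal_def by (auto simp: inner_commute)

lemma pythag: "x \<bullet> y = 0 \<Longrightarrow> (norm (x + y))\<^sup>2 = (norm x)\<^sup>2 + (norm y)\<^sup>2"
  by (simp add: power2_norm_eq_inner inner_add_left inner_add_right inner_commute)

lemma closest_dist:
  fixes E :: "'v::real_inner set"
  assumes "fin_dim_subspace E"
  shows "infdist z ((+) c ` E) = norm ((z - c) - orth_proj E (z - c))"
proof (rule antisym)
  let ?p = "orth_proj E (z - c)"
  have "c + ?p \<in> (+) c ` E" using proj_props[OF assms] by blast
  hence "infdist z ((+) c ` E) \<le> dist z (c + ?p)" by (rule infdist_le)
  thus "infdist z ((+) c ` E) \<le> norm ((z - c) - ?p)" by (simp add: dist_norm algebra_simps)
  have ne: "(+) c ` E \<noteq> {}" using proj_props[OF assms] by blast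
  show "norm ((z - c) - ?p) \<le> infdist z ((+) c ` E)"
    unfolding infdist_notempty[OF ne]
  proof (rule cINF_greatest[OF ne])
    fix a assume "a \<in> (+) c ` E"
    then obtain q where q: "q \<in> E" "a = c + q" by blast
    have h: "((z - c) - ?p) \<bullet> (?p - q) = 0"
      using proj_props[OF assms] q(1) fds_subspace[OF assms] subspace_diff perp_inner by blast
    have "(norm ((z - c) - ?p))\<^sup>2 \<le> (norm ((z - c) - ?p))\<^sup>2 + (norm (?p - q))\<^sup>2" by simp
    also have "\<dots> = (norm (((z - c) - ?p) + (?p - q)))\<^sup>2" using pythag[OF h] by simp
    also have "((z - c) - ?p) + (?p - q) = z - a" using q by (simp add: algebra_simps)
    finally have "(norm ((z - c) - ?p))\<^sup>2 \<le> (norm (z - a))\<^sup>2" .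
    hence "norm ((z - c) - ?p) \<le> norm (z - a)" by (rule power2_le_imp_le) simp
    thus "norm ((z - c) - ?p) \<le> dist z a" by (simp add: dist_norm)
  qed
qed




lemma proj_norm_le:
  fixes W :: "'v::real_inner set"
  assumes "fin_dim_subspace W"
  shows "norm (orth_proj W g) \<le> norm g"
proof -
  have h: "orth_proj W g \<bullet> (g - orth_proj W g) = 0"
    using proj_props[OF assms] perp_inner by (metis inner_commute)
  have "(norm (orth_proj W g))\<^sup>2 \<le> (norm (orth_proj W g))\<^sup>2 + (norm (g - orth_proj W g))\<^sup>2" by simp
  also have "\<dots> = (norm (orth_proj W g + (g - orth_proj W g)))\<^sup>2" using pythag[OF h] by simp
  finally have "(norm (orth_proj W g))\<^sup>2 \<le> (norm g)\<^sup>2" by simp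
  thus ?thesis by (rule power2_le_imp_le) simp
qed

lemma mu_props:
  fixes W E :: "'v::real_inner set"
  assumes W: "fin_dim_subspace W" and fin: "mu_EW E W < \<infinity>"
  obtains \<mu> where "mu_EW E W = ereal \<mu>" "1 \<le> \<mu>" "\<And>g. g \<in> E \<Longrightarrow> norm g \<le> \<mu> * norm (orth_proj W g)"
proof (cases "E - {0} = {}")
  case True
  hence "mu_EW E W = ereal 1" unfolding mu_EW_def by simp
  moreover have "norm g \<le> 1 * norm (orth_proj W g)" if "g \<in> E" for g
    using True that by auto
  ultimately show ?thesis using that by auto
next
  case False
  define F where "F = (\<lambda>v. if orth_proj W v = 0 then \<infinity> else ereal (norm v / norm (orth_proj W v)))"
  have mu: "mu_EW E W = (SUP v\<in>E - {0}. F v)" unfolding mu_EW_def F_def using False by simp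
  have Fle: "F v \<le> mu_EW E W" if "v \<in> E - {0}" for v
    unfolding mu using that by (rule SUP_upper)
  have key: "orth_proj W v \<noteq> 0 \<and> ereal (norm v / norm (orth_proj W v)) \<le> mu_EW E W \<and> 1 \<le> norm v / norm (orth_proj W v)"
    if v: "v \<in> E - {0}" for v
  proof -
    have "orth_proj W v \<noteq> 0"
    proof
      assume "orth_proj W v = 0"
      hence "F v = \<infinity>" unfolding F_def by simp
      thus False using Fle[OF v] fin by simp
    qed
    moreover have "ereal (norm v / norm (orth_proj W v)) \<le> mu_EW E W"
      using Fle[OF v] calculation unfolding F_def by simp
    moreover have "1 \<le> norm v / norm (orth_proj W v)"
      using proj_norm_le[OF W, of v] calculation(1) by simp
    ultimately show ?thesis by blast
  qed
  obtain v0 where v0: "v0 \<in> E - {0}" using False by blast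
  have ge1: "ereal 1 \<le> mu_EW E W"
    using key[OF v0] by (meson ereal_less_eq(3) order_trans)
  define \<mu> where "\<mu> = real_of_ereal (mu_EW E W)"
  have mueq: "mu_EW E W = ereal \<mu>" unfolding \<mu>_def using ge1 fin
    using ge1 fin by (cases "mu_EW E W") auto
  have "1 \<le> \<mu>" using ge1 mueq by simp
  moreover have "norm g \<le> \<mu> * norm (orth_proj W g)" if g: "g \<in> E" for g
  proof (cases "g = 0")
    case True thus ?thesis using \<open>1 \<le> \<mu>\<close> by simp
  next
    case False
    hence gg: "g \<in> E - {0}" using g by simp
    from key[OF gg] mueq have n0: "orth_proj W g \<noteq> 0" and q: "norm g / norm (orth_proj W g) \<le> \<mu>" by auto
    thus ?thesis by (simp add: divide_le_eq mult.commute)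
  qed
  ultimately show ?thesis using that mueq by blast
qed

lemma arith_key:
  fixes n \<alpha> \<beta> D G \<mu> eps :: real
  assumes "0 \<le> n" "0 \<le> \<alpha>" "0 \<le> \<beta>" "D = \<alpha>\<^sup>2 + \<beta>\<^sup>2" "D \<le> n * \<alpha>" "n\<^sup>2 = D + G\<^sup>2"
    "0 \<le> G" "G \<le> \<mu> * \<beta>" "1 \<le> \<mu>" "D \<le> eps\<^sup>2" "0 \<le> eps"
  shows "n \<le> \<mu> * eps"
proof -
  have G2: "G\<^sup>2 \<le> \<mu>\<^sup>2 * \<beta>\<^sup>2"
    using assms power_mono[of G "\<mu> * \<beta>" 2] by (simp add: power_mult_distrib)
  have D0: "0 \<le> D" using assms by simp
  have DA: "D \<le> \<mu>\<^sup>2 * \<alpha>\<^sup>2"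
  proof (cases "\<beta> = 0")
    case True
    have "1 \<le> \<mu>\<^sup>2" using assms by (simp add: one_le_power)
    hence "\<alpha>\<^sup>2 \<le> \<mu>\<^sup>2 * \<alpha>\<^sup>2" by (simp add: mult_le_cancel_right1)
    thus ?thesis using True assms by simp
  next
    case False
    have "D\<^sup>2 \<le> (n * \<alpha>)\<^sup>2" using assms D0 power_mono by blast
    also have "\<dots> = (D + G\<^sup>2) * \<alpha>\<^sup>2" using assms by (simp add: power_mult_distrib)
    also have "\<dots> \<le> (D + \<mu>\<^sup>2 * \<beta>\<^sup>2) * \<alpha>\<^sup>2" using G2 by (simp add: mult_right_mono)
    finally have "D * (\<alpha>\<^sup>2 + \<beta>\<^sup>2) \<le> (D + \<mu>\<^sup>2 * \<beta>\<^sup>2) * \<alpha>\<^sup>2"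
      using assms by (simp add: power2_eq_square)
    hence "D * \<beta>\<^sup>2 \<le> (\<mu>\<^sup>2 * \<alpha>\<^sup>2) * \<beta>\<^sup>2" by (simp add: algebra_simps)
    moreover have "0 < \<beta>\<^sup>2" using False by simp
    ultimately show ?thesis by simp
  qed
  have "n\<^sup>2 \<le> \<mu>\<^sup>2 * D" using assms G2 DA by (simp add: algebra_simps)
  also have "\<dots> \<le> \<mu>\<^sup>2 * eps\<^sup>2" using assms by (simp add: mult_left_mono)
  also have "\<dots> = (\<mu> * eps)\<^sup>2" by (simp add: power_mult_distrib)
  finally show ?thesis by (rule power2_le_imp_le) (use assms in simp)
qed




lemma pbdw_est:
  fixes W Vb :: "'v::real_inner set"
  assumes W: "fin_dim_subspace W" and Vb: "fin_dim_subspace Vb"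
    and fin: "mu_EW Vb W < \<infinity>" and adm: "mu_EW Vb W * ereal eps \<le> ereal \<sigma>"
    and epsb: "infdist u ((+) c ` Vb) \<le> eps"
    and uw: "u - w \<in> orthogonal_comp W"
    and us: "us \<in> (+) w ` orthogonal_comp W"
    and opt: "\<forall>v\<in>(+) w ` orthogonal_comp W. infdist us ((+) c ` Vb) \<le> infdist v ((+) c ` Vb)"
  shows "norm (u - us) \<le> \<sigma>"
proof -
  let ?Q = "orth_proj Vb" and ?P = "orth_proj W"
  define Dz where "Dz = (\<lambda>z. (z - c) - ?Q (z - c))"
  have dist_eq: "infdist z ((+) c ` Vb) = norm (Dz z)" for z
    unfolding Dz_def by (rule closest_dist[OF Vb])
  have sWp: "subspace (orthogonal_comp W)" by (rule subspace_orthogonal_comp)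
  obtain t0 where t0: "t0 \<in> orthogonal_comp W" "us = w + t0" using us by blast
  define e where "e = u - us"
  have eW: "e \<in> orthogonal_comp W"
  proof -
    have "(u - w) - t0 \<in> orthogonal_comp W" using uw t0 sWp subspace_diff by blast
    thus ?thesis unfolding e_def t0(2) by (simp add: algebra_simps)
  qed
  define a where "a = Dz us"
  have Dadd: "Dz (us + t) = a + (t - ?Q t)" for t
  proof -
    have "?Q ((us - c) + t) = ?Q (us - c) + ?Q t" by (rule proj_add[OF Vb])
    hence "?Q (us + t - c) = ?Q (us - c) + ?Q t" by (simp add: algebra_simps)
    thus ?thesis unfolding a_def Dz_def by (simp add: algebra_simps)
  qed
  have orth: "a \<bullet> (t - ?Q t) = 0" if t: "t \<in> orthogonal_comp W" for t
  proof (rule ccontr)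
    define cc where "cc = t - ?Q t"
    assume ne: "a \<bullet> (t - ?Q t) \<noteq> 0"
    hence ne': "a \<bullet> cc \<noteq> 0" unfolding cc_def .
    hence "cc \<noteq> 0" by auto
    hence cc0: "0 < cc \<bullet> cc" by simp
    define l where "l = - (a \<bullet> cc) / (cc \<bullet> cc)"
    have "l *\<^sub>R t \<in> orthogonal_comp W" using t sWp subspace_scale by blast
    hence "us + l *\<^sub>R t \<in> (+) w ` orthogonal_comp W"
      using t0 sWp subspace_add by (metis (no_types, lifting) add.assoc image_eqI)
    hence "infdist us ((+) c ` Vb) \<le> infdist (us + l *\<^sub>R t) ((+) c ` Vb)" using opt by blast
    hence "norm a \<le> norm (a + (l *\<^sub>R t - ?Q (l *\<^sub>R t)))" unfolding dist_eq Dadd a_def by simp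
    also have "l *\<^sub>R t - ?Q (l *\<^sub>R t) = l *\<^sub>R cc" unfolding cc_def proj_scale[OF Vb]
      by (simp add: algebra_simps)
    finally have "norm a \<le> norm (a + l *\<^sub>R cc)" .
    hence "(norm a)\<^sup>2 \<le> (norm (a + l *\<^sub>R cc))\<^sup>2" by (simp add: power_mono)
    hence E0: "a \<bullet> a \<le> (a + l *\<^sub>R cc) \<bullet> (a + l *\<^sub>R cc)" by (simp add: power2_norm_eq_inner)
    have E1: "(a + l *\<^sub>R cc) \<bullet> (a + l *\<^sub>R cc) = a \<bullet> a + 2 * l * (a \<bullet> cc) + l * l * (cc \<bullet> cc)"
      by (simp add: inner_add_left inner_add_right inner_commute algebra_simps)
    have E2: "2 * l * (a \<bullet> cc) + l * l * (cc \<bullet> cc) = - (a \<bullet> cc) * (a \<bullet> cc) / (cc \<bullet> cc)"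
      unfolding l_def using cc0 by (simp add: field_simps power2_eq_square)
    have "0 \<le> - (a \<bullet> cc) * (a \<bullet> cc) / (cc \<bullet> cc)" using E0 E1 E2 by linarith
    hence "(a \<bullet> cc) * (a \<bullet> cc) \<le> 0" using cc0 by (simp add: divide_le_0_iff)
    moreover have "0 < (a \<bullet> cc) * (a \<bullet> cc)" using ne' by (simp add: zero_less_mult_iff linorder_neq_iff disj_commute)
    ultimately show False by simp
  qed
  define d where "d = e - ?Q e"
  define g where "g = ?Q e"
  have b: "Dz u = a + d"
    using Dadd[of e] unfolding d_def e_def by simp
  have ad: "a \<bullet> d = 0" unfolding d_def by (rule orth[OF eW])
  have "(norm (Dz u))\<^sup>2 = (norm a)\<^sup>2 + (norm d)\<^sup>2" unfolding b by (rule pythag[OF ad])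
  hence "(norm d)\<^sup>2 \<le> (norm (Dz u))\<^sup>2" by simp
  moreover have "norm (Dz u) \<le> eps" using epsb dist_eq by simp
  moreover have eps0: "0 \<le> eps" using epsb infdist_nonneg order_trans by blast
  ultimately have Deps: "(norm d)\<^sup>2 \<le> eps\<^sup>2"
    by (meson norm_ge_zero order_trans power_mono)
  have gVb: "g \<in> Vb" unfolding g_def using proj_props[OF Vb] by blast
  have dperp: "d \<in> orthogonal_comp Vb" unfolding d_def using proj_props[OF Vb] by blast
  have edg: "e = d + g" unfolding d_def g_def by simp
  have dg: "d \<bullet> g = 0" using perp_inner[OF dperp gVb] .
  have Pe: "?P e = 0" by (rule proj_perp[OF W eW])
  have Pg: "?P g = - ?P d"
  proof -
    have "?P (e - d) = ?P e - ?P d" by (rule proj_diff[OF W])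
    hence "?P g = ?P e - ?P d" using edg by simp
    thus ?thesis using Pe by simp
  qed
  define \<alpha> where "\<alpha> = norm (d - ?P d)"
  define \<beta> where "\<beta> = norm (?P d)"
  have h1: "(d - ?P d) \<bullet> ?P d = 0"
    using proj_props[OF W, of d] perp_inner by blast
  have "(norm ((d - ?P d) + ?P d))\<^sup>2 = \<alpha>\<^sup>2 + \<beta>\<^sup>2" unfolding \<alpha>_def \<beta>_def by (rule pythag[OF h1])
  hence Dab: "(norm d)\<^sup>2 = \<alpha>\<^sup>2 + \<beta>\<^sup>2" by simp
  have "(norm (d + g))\<^sup>2 = (norm d)\<^sup>2 + (norm g)\<^sup>2" by (rule pythag[OF dg])
  hence ne2: "(norm e)\<^sup>2 = (norm d)\<^sup>2 + (norm g)\<^sup>2" using edg by simp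
  have "e \<bullet> d = d \<bullet> d" unfolding edg using dg by (simp add: inner_add_left inner_commute[of g d])
  moreover have "e \<bullet> ?P d = 0" using perp_inner[OF eW] proj_props[OF W] by blast
  ultimately have "e \<bullet> (d - ?P d) = (norm d)\<^sup>2" by (simp add: inner_diff_right power2_norm_eq_inner)
  hence Dle: "(norm d)\<^sup>2 \<le> norm e * \<alpha>" unfolding \<alpha>_def using norm_cauchy_schwarz by metis
  obtain \<mu> where mu: "mu_EW Vb W = ereal \<mu>" "1 \<le> \<mu>" "\<And>g. g \<in> Vb \<Longrightarrow> norm g \<le> \<mu> * norm (?P g)"
    using mu_props[OF W fin] by blast
  have gb: "norm g \<le> \<mu> * \<beta>" using mu(3)[OF gVb] Pg unfolding \<beta>_def by simp
  have "norm e \<le> \<mu> * eps"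
    by (rule arith_key[where D = "(norm d)\<^sup>2" and G = "norm g" and \<alpha> = \<alpha> and \<beta> = \<beta>])
       (use Dab Dle ne2 gb mu(2) Deps eps0 in \<open>auto simp: \<alpha>_def \<beta>_def\<close>)
  also have "\<mu> * eps \<le> \<sigma>" using adm mu(1) by simp
  finally show ?thesis unfolding e_def .
qed




lemma sol_ok:
  fixes A :: "'y \<Rightarrow> ('v::real_normed_vector \<Rightarrow>\<^sub>L 'z::real_normed_vector)"
  assumes "\<forall>v. blinfun_apply Ainv (blinfun_apply (A y) v) = v"
      "\<forall>z. blinfun_apply (A y) (blinfun_apply Ainv z) = z"
  shows "sol A f y = blinfun_apply Ainv (f y)"
  unfolding sol_def
proof (rule the_equality)
  show "blinfun_apply (A y) (blinfun_apply Ainv (f y)) = f y" using assms by simp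
  fix v assume "blinfun_apply (A y) v = f y"
  thus "v = blinfun_apply Ainv (f y)" using assms by metis
qed

lemma resid_bounds:
  fixes A :: "'y \<Rightarrow> ('v::real_normed_vector \<Rightarrow>\<^sub>L 'z::real_normed_vector)"
  assumes "\<forall>v. blinfun_apply Ainv (blinfun_apply (A y) v) = v"
      "\<forall>z. blinfun_apply (A y) (blinfun_apply Ainv z) = z"
      "norm Ainv \<le> inverse r" "0 < r" "norm (A y) \<le> R"
  shows "r * norm (v - sol A f y) \<le> resid A f v y" "resid A f v y \<le> R * norm (v - sol A f y)"
proof -
  have s: "blinfun_apply (A y) (sol A f y) = f y" using sol_ok[of Ainv A y f, OF assms(1,2)] assms(2) by simp
  have re: "resid A f v y = norm (blinfun_apply (A y) (v - sol A f y))"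
    unfolding resid_def using s by (simp add: blinfun.diff_right)
  have "resid A f v y \<le> norm (A y) * norm (v - sol A f y)" unfolding re by (rule norm_blinfun)
  also have "\<dots> \<le> R * norm (v - sol A f y)" using assms(5) by (simp add: mult_right_mono)
  finally show "resid A f v y \<le> R * norm (v - sol A f y)" .
  have "norm (v - sol A f y) = norm (blinfun_apply Ainv (blinfun_apply (A y) (v - sol A f y)))"
    using assms(1) by simp
  also have "\<dots> \<le> norm Ainv * resid A f v y" unfolding re by (rule norm_blinfun)
  also have "\<dots> \<le> inverse r * resid A f v y"
    using assms(3) by (simp add: mult_right_mono resid_def)
  finally show "r * norm (v - sol A f y) \<le> resid A f v y"
    using assms(4) by (simp add: field_simps)
qed

theorem mainTheorem7:
  fixes Y :: "(real ^ 'd) set"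
    and A :: "real ^ 'd \<Rightarrow> ('v::{real_inner, complete_space} \<Rightarrow>\<^sub>L 'z::{real_inner, complete_space})"
    and f :: "real ^ 'd \<Rightarrow> 'z"
    and r R :: real
    and M :: "'v set"
    and W :: "'v set"
    and K :: nat
    and Mk :: "nat \<Rightarrow> 'v set"
    and ubar :: "nat \<Rightarrow> 'v"
    and Vbar :: "nat \<Rightarrow> 'v set"
    and eps :: "nat \<Rightarrow> real"
    and \<sigma> :: real
    and ustar :: "nat \<Rightarrow> 'v \<Rightarrow> 'v"
    and kstar :: "'v \<Rightarrow> nat"
    and y ystar :: "real ^ 'd"
  assumes Y_compact: "compact Y"
    and A_cont: "continuous_on Y A"
    and f_cont: "continuous_on Y f"
    and rR: "0 < r" "r \<le> R"
    and A_bound: "\<forall>y\<in>Y. norm (A y) \<le> R"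
    and A_iso: "\<forall>y\<in>Y. \<exists>Ainv :: 'z \<Rightarrow>\<^sub>L 'v.
                   (\<forall>v. blinfun_apply Ainv (blinfun_apply (A y) v) = v)
                 \<and> (\<forall>z. blinfun_apply (A y) (blinfun_apply Ainv z) = z)
                 \<and> norm Ainv \<le> inverse r"
    and M_def: "M = sol A f ` Y"
    and W_fd: "fin_dim_subspace W"
    and M_cover: "M = (\<Union>k<K. Mk k)"
    and Vbar_fd: "\<forall>k<K. fin_dim_subspace (Vbar k) \<and> dim (Vbar k) \<le> dim W"
    and eps_bound: "\<forall>k<K. \<forall>u\<in>Mk k. infdist u ((+) (ubar k) ` Vbar k) \<le> eps k"
    and mu_finite: "\<forall>k<K. mu_EW (Vbar k) W < \<infinity>"
    and sigma_nonneg: "0 \<le> \<sigma>"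
    and admissible: "\<forall>k<K. mu_EW (Vbar k) W * ereal (eps k) \<le> ereal \<sigma>"
    and pbdw: "\<forall>k<K. \<forall>w\<in>W.
                 ustar k w \<in> (+) w ` orthogonal_comp W
               \<and> (\<forall>v\<in>(+) w ` orthogonal_comp W.
                    infdist (ustar k w) ((+) (ubar k) ` Vbar k) \<le> infdist v ((+) (ubar k) ` Vbar k))"
    and selection: "\<forall>w\<in>W. kstar w < K \<and>
                 (\<forall>k<K. (INF y'\<in>Y. resid A f (ustar (kstar w) w) y')
                         \<le> (INF y'\<in>Y. resid A f (ustar k w) y'))"
    and y_in: "y \<in> Y"
    and ystar_in: "ystar \<in> Y"
    and ystar_min: "\<forall>y'\<in>Y.
          resid A f (ustar (kstar (orth_proj W (sol A f y))) (orth_proj W (sol A f y))) ystar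
        \<le> resid A f (ustar (kstar (orth_proj W (sol A f y))) (orth_proj W (sol A f y))) y'"
  shows "norm (sol A f y - sol A f ystar) \<le> (1 + R / r) * delta M W ((R / r) * \<sigma>)
       \<and> ((delta M W 0 = 0 \<and> bdd_above ((\<lambda>s. delta M W s / s) ` {0<..}))
           \<longrightarrow> norm (sol A f y - sol A f ystar) \<le> (2 * mu_MW M W + 1) * (R / r) * \<sigma>)"
  proof -
  define \<kappa> where "\<kappa> = R / r"
  have kap0: "0 \<le> \<kappa>" using rR unfolding \<kappa>_def by simp
  have Yne: "Y \<noteq> {}" using y_in by blast
  have RB: "r * norm (v - sol A f y') \<le> resid A f v y'" "resid A f v y' \<le> R * norm (v - sol A f y')"
    if y'Y: "y' \<in> Y" for v y'
  proof -
    obtain Ainv :: "'z \<Rightarrow>\<^sub>L 'v" where Ai: "\<forall>v. blinfun_apply Ainv (blinfun_apply (A y') v) = v"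
      "\<forall>z. blinfun_apply (A y') (blinfun_apply Ainv z) = z" "norm Ainv \<le> inverse r"
      using bspec[OF A_iso y'Y] by blast
    show "r * norm (v - sol A f y') \<le> resid A f v y'" "resid A f v y' \<le> R * norm (v - sol A f y')"
      using resid_bounds[where Ainv=Ainv and A=A and y=y' and f=f and v=v and r=r and R=R, OF Ai rR(1)] A_bound y'Y by auto
  qed
  have RBd: "norm (v - sol A f y') \<le> resid A f v y' / r" if "y' \<in> Y" for v y'
    using RB(1)[OF that, of v] rR(1) by (simp add: field_simps)
  have resid0: "0 \<le> resid A f v y'" for v y' unfolding resid_def by simp
  obtain C where C: "\<forall>y'\<in>Y. norm (f y') \<le> C"
    using compact_imp_bounded[OF compact_continuous_image[OF f_cont Y_compact]]
    unfolding bounded_iff by blast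
  have Mb: "norm m \<le> C / r" if mM: "m \<in> M" for m
  proof -
    obtain y' where y': "y' \<in> Y" "m = sol A f y'" using mM M_def by blast
    have "r * norm (0 - sol A f y') \<le> resid A f 0 y'" by (rule RB(1)[OF y'(1)])
    hence "r * norm m \<le> norm (f y')" using y' by (simp add: resid_def)
    hence "r * norm m \<le> C" using C y' by force
    thus ?thesis using rR(1) by (simp add: field_simps)
  qed
  have Mne: "M \<noteq> {}" using M_def Yne by blast
  have fatb: "norm v \<le> C / r + s" if "v \<in> fattened M s" for v s
  proof -
    have "norm v - C / r \<le> infdist v M"
      unfolding infdist_notempty[OF Mne]
    proof (rule cINF_greatest[OF Mne])
      fix m assume "m \<in> M"
      hence "norm m \<le> C / r" by (rule Mb)
      moreover have "norm v \<le> norm m + dist v m" by (metis dist_norm norm_triangle_sub add.commute)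
      ultimately show "norm v - C / r \<le> dist v m" by simp
    qed
    thus ?thesis using that unfolding fattened_def by simp
  qed
  have dbdd: "bdd_above {norm (a - b) | a b. a \<in> fattened M s \<and> b \<in> fattened M s \<and> a - b \<in> orthogonal_comp W}" for s
  proof (rule bdd_aboveI[where M = "2 * (C / r + s)"])
    fix x assume "x \<in> {norm (a - b) | a b. a \<in> fattened M s \<and> b \<in> fattened M s \<and> a - b \<in> orthogonal_comp W}"
    then obtain a b where ab: "x = norm (a - b)" "a \<in> fattened M s" "b \<in> fattened M s" by blast
    have "norm (a - b) \<le> norm a + norm b" by (rule norm_triangle_ineq4)
    thus "x \<le> 2 * (C / r + s)" using fatb[OF ab(2)] fatb[OF ab(3)] ab(1) by simp
  qed
  have delta_ge: "norm (a - b) \<le> delta M W s" if "a \<in> fattened M s" "b \<in> fattened M s" "a - b \<in> orthogonal_comp W" for a b s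
    unfolding delta_def by (rule cSup_upper[OF _ dbdd]) (use that in blast)
  define u where "u = sol A f y"
  define w where "w = orth_proj W u"
  have wW: "w \<in> W" and uw: "u - w \<in> orthogonal_comp W" unfolding w_def using proj_props[OF W_fd] by auto
  have uM: "u \<in> M" unfolding u_def M_def using y_in by blast
  then obtain k where k: "k < K" "u \<in> Mk k" using M_cover by blast
  define uk where "uk = ustar k w"
  define us where "us = ustar (kstar w) w"
  have ks: "kstar w < K" and sel: "\<forall>k<K. (INF y'\<in>Y. resid A f us y') \<le> (INF y'\<in>Y. resid A f (ustar k w) y')"
    using selection wW unfolding us_def by auto
  have uk_pb: "uk \<in> (+) w ` orthogonal_comp W"
      "\<forall>v\<in>(+) w ` orthogonal_comp W. infdist uk ((+) (ubar k) ` Vbar k) \<le> infdist v ((+) (ubar k) ` Vbar k)"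
    using pbdw k(1) wW unfolding uk_def by auto
  have us_pb: "us \<in> (+) w ` orthogonal_comp W"
    using pbdw ks wW unfolding us_def by auto
  have uuk: "norm (u - uk) \<le> \<sigma>"
    by (rule pbdw_est[OF W_fd _ _ _ _ uw uk_pb])
       (use Vbar_fd mu_finite admissible eps_bound k in auto)
  have "resid A f us ystar \<le> (INF y'\<in>Y. resid A f us y')"
    by (rule cINF_greatest[OF Yne]) (use ystar_min in \<open>simp add: us_def w_def u_def\<close>)
  also have "\<dots> \<le> (INF y'\<in>Y. resid A f uk y')" using sel k(1) unfolding uk_def by blast
  also have "\<dots> \<le> resid A f uk y"
    by (rule cINF_lower[OF _ y_in]) (auto intro!: bdd_belowI[where m = 0] simp: resid0)
  also have "\<dots> \<le> R * norm (uk - u)" using RB(2)[OF y_in] unfolding u_def by simp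
  also have "\<dots> \<le> R * \<sigma>" using uuk rR by (simp add: norm_minus_commute mult_left_mono)
  finally have rs: "resid A f us ystar \<le> R * \<sigma>" .
  have "norm (us - sol A f ystar) \<le> resid A f us ystar / r" by (rule RBd[OF ystar_in])
  also have "\<dots> \<le> R * \<sigma> / r" using rs rR(1) by (simp add: divide_right_mono)
  finally have us_close: "norm (us - sol A f ystar) \<le> \<kappa> * \<sigma>" unfolding \<kappa>_def by simp
  have ksig0: "0 \<le> \<kappa> * \<sigma>" using kap0 sigma_nonneg by simp
  have us_fat: "us \<in> fattened M (\<kappa> * \<sigma>)"
  proof -
    have "sol A f ystar \<in> M" using M_def ystar_in by blast
    hence "infdist us M \<le> dist us (sol A f ystar)" by (rule infdist_le)
    thus ?thesis using us_close unfolding fattened_def by (simp add: dist_norm)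
  qed
  have u_fat: "u \<in> fattened M (\<kappa> * \<sigma>)" using uM ksig0 unfolding fattened_def by simp
  have u_us: "u - us \<in> orthogonal_comp W"
  proof -
    obtain t where t: "t \<in> orthogonal_comp W" "us = w + t" using us_pb by blast
    have "(u - w) - t \<in> orthogonal_comp W" using uw t subspace_orthogonal_comp subspace_diff by blast
    thus ?thesis using t by (simp add: algebra_simps)
  qed
  have d1: "norm (u - us) \<le> delta M W (\<kappa> * \<sigma>)" by (rule delta_ge[OF u_fat us_fat u_us])
  have "norm (us - sol A f ystar) \<le> resid A f us ystar / r" by (rule RBd[OF ystar_in])
  also have "\<dots> \<le> resid A f us y / r"
    using ystar_min y_in rR(1) by (simp add: us_def w_def u_def divide_right_mono)
  also have "\<dots> \<le> R * norm (us - u) / r"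
    using RB(2)[OF y_in] rR(1) by (simp add: u_def divide_right_mono)
  also have "\<dots> = \<kappa> * norm (u - us)" unfolding \<kappa>_def by (simp add: norm_minus_commute)
  finally have us2: "norm (us - sol A f ystar) \<le> \<kappa> * norm (u - us)" .
  have tri: "norm (u - sol A f ystar) \<le> norm (u - us) + norm (us - sol A f ystar)"
    by (metis norm_triangle_ineq add_diff_cancel_left' diff_add_cancel diff_diff_eq2)
  have part1: "norm (u - sol A f ystar) \<le> (1 + \<kappa>) * delta M W (\<kappa> * \<sigma>)"
  proof -
    have "norm (u - sol A f ystar) \<le> norm (u - us) + \<kappa> * norm (u - us)" using tri us2 by simp
    also have "\<dots> = (1 + \<kappa>) * norm (u - us)" by (simp add: algebra_simps)
    also have "\<dots> \<le> (1 + \<kappa>) * delta M W (\<kappa> * \<sigma>)" using d1 kap0 by (simp add: mult_left_mono)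
    finally show ?thesis .
  qed
  have part2: "norm (u - sol A f ystar) \<le> (2 * mu_MW M W + 1) * \<kappa> * \<sigma>"
    if h: "delta M W 0 = 0" "bdd_above ((\<lambda>s. delta M W s / s) ` {0<..})"
  proof (cases "\<kappa> * \<sigma> = 0")
    case True
    hence "delta M W (\<kappa> * \<sigma>) = 0" using h(1) by (metis (full_types))
    hence "norm (u - sol A f ystar) \<le> 0" using part1 by simp
    moreover have "(2 * mu_MW M W + 1) * \<kappa> * \<sigma> = 0" using True by (simp add: mult.assoc)
    ultimately show ?thesis by linarith
  next
    case False
    hence sp: "0 < \<kappa> * \<sigma>" using ksig0 by linarith
    have "delta M W (\<kappa> * \<sigma>) / (\<kappa> * \<sigma>) \<le> (SUP s\<in>{0<..}. delta M W s / s)"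
      by (rule cSUP_upper[OF _ h(2)]) (use sp in simp)
    also have "\<dots> = 2 * mu_MW M W" unfolding mu_MW_def by simp
    finally have "delta M W (\<kappa> * \<sigma>) \<le> 2 * mu_MW M W * (\<kappa> * \<sigma>)"
      using sp by (simp add: divide_le_eq)
    hence "norm (u - us) \<le> 2 * mu_MW M W * (\<kappa> * \<sigma>)" using d1 by simp
    hence "norm (u - sol A f ystar) \<le> 2 * mu_MW M W * (\<kappa> * \<sigma>) + \<kappa> * \<sigma>"
      using tri us_close by simp
    thus ?thesis by (simp add: algebra_simps)
  qed
  show ?thesis using part1 part2 unfolding u_def \<kappa>_def by simp
qed


end
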